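(* There is an absolute constant $c>0$ such that for every integer $f\ge1$ and every real $x\ge3$, $$\sum_{\substack{p\ \text{prime},\ f^2\le p\le x\\ p\equiv1 \pmod f}}\frac{1}{p\log(3x/p)}\le c\,\frac{\log\log x}{\varphi(f)\log x}.$$
   Context: $\varphi$ denotes Euler's totient function. *)

theory Defs
  imports "HOL-Analysis.Analysis" "HOL-Number_Theory.Number_Theory"
begin

end

theory Submission imports Defs begin

lemma alt_sum_pow:
  assumes "finite A"
  shows "(\<Sum>X\<in>Pow A. (-1::real) ^ card X) = (if A = {} then 1 else 0)"
proof -
  have "(\<Prod>x\<in>A. (-1::real) + 1) = (\<Sum>X\<in>Pow A. (\<Prod>x\<in>X. (-1::real)) * (\<Prod>x\<in>A-X. 1))"
    by (rule prod_add[OF assms])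
  moreover have "(\<Prod>x\<in>A. (-1::real) + 1) = (if A = {} then 1 else 0)"
    using assms by auto
  ultimately show ?thesis by simp
qed

lemma alt_sum_interval:
  assumes "finite R" "T \<subseteq> R"
  shows "(\<Sum>S\<in>{S. T \<subseteq> S \<and> S \<subseteq> R}. (-1::real) ^ card (R - S)) = (if R = T then 1 else 0)"
proof -
  have "(\<Sum>S\<in>{S. T \<subseteq> S \<and> S \<subseteq> R}. (-1::real) ^ card (R - S)) = (\<Sum>X\<in>Pow (R - T). (-1::real) ^ card X)"
    by (rule sum.reindex_bij_witness[where i="\<lambda>X. R - X" and j="\<lambda>S. R - S"]) (use assms in auto)
  also have "\<dots> = (if R = T then 1 else 0)"
    using assms by (subst alt_sum_pow) auto
  finally show ?thesis .
qed

lemma prod_primes_dvd: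
  fixes S :: "nat set"
  assumes "finite S" "\<forall>p\<in>S. prime p" "\<forall>p\<in>S. p dvd n"
  shows "(\<Prod>p\<in>S. p) dvd n"
  using assms
proof (induction S rule: finite_induct)
  case empty then show ?case by simp
next
  case (insert p S)
  have "coprime p (\<Prod>q\<in>S. q)"
  proof (rule prime_imp_coprime)
    show "prime p" using insert by auto
    show "\<not> p dvd (\<Prod>q\<in>S. q)"
    proof
      assume "p dvd (\<Prod>q\<in>S. q)"
      then obtain q where "q \<in> S" "p dvd q"
        using insert prime_dvd_prod_iff[of S p "\<lambda>x. x"] by auto
      then show False using insert by (metis insert_iff primes_dvd_imp_eq)
    qed
  qed
  then show ?case using insert by (simp add: divides_mult)
qed

lemma prime_factors_prod_primes:
  fixes S :: "nat set"
  assumes "finite S" "\<forall>p\<in>S. prime p"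
  shows "prime_factors (\<Prod>p\<in>S. p) = S"
proof -
  have "prime_factors (\<Prod>p\<in>S. p) = \<Union>((prime_factors \<circ> (\<lambda>x. x)) ` S)"
    using assms by (intro prime_factors_prod) (auto dest: prime_gt_0_nat)
  also have "\<dots> = S" using assms by (auto simp: prime_prime_factors)
  finally show ?thesis .
qed


lemma block_card:
  fixes m r k :: nat
  assumes m: "m \<ge> 1" and r: "r < m"
  shows "card {n \<in> {k<..k+m}. n mod m = r} = 1"
proof -
  define I where "I = {k<..k+m}"
  have inj: "inj_on (\<lambda>n. n mod m) I"
  proof (rule inj_onI)
    have aux: "n1 = n2" if "n1 \<in> I" "n2 \<in> I" "n1 mod m = n2 mod m" "n1 \<le> n2" for n1 n2
    proof (rule ccontr)
      assume "n1 \<noteq> n2"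
      then have pos: "n2 - n1 > 0" using that by auto
      have "m dvd n2 - n1" using that(3,4) mod_eq_dvd_iff_nat[of n1 n2 m] by auto
      then have "m \<le> n2 - n1" using pos by (rule dvd_imp_le)
      moreover have "n2 - n1 < m" using that(1,2) unfolding I_def by auto
      ultimately show False by simp
    qed
    fix n1 n2 assume "n1 \<in> I" "n2 \<in> I" "n1 mod m = n2 mod m"
    then show "n1 = n2" using aux[of n1 n2] aux[of n2 n1] by (cases "n1 \<le> n2") auto
  qed
  have cardI: "card I = m" unfolding I_def by simp
  have sub: "(\<lambda>n. n mod m) ` I \<subseteq> {..<m}" using m by auto
  have "card ((\<lambda>n. n mod m) ` I) = m" using card_image[OF inj] cardI by simp
  then have eq: "(\<lambda>n. n mod m) ` I = {..<m}"
    using sub by (intro card_subset_eq) auto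
  then obtain n0 where n0: "n0 \<in> I" "n0 mod m = r" using r by (metis image_iff lessThan_iff)
  have "{n \<in> I. n mod m = r} = {n0}"
    using n0 inj unfolding inj_on_def by auto
  then show ?thesis unfolding I_def by simp
qed

lemma count_bounds:
  fixes m r N :: nat
  assumes m: "m \<ge> 1" and r: "r < m"
  shows "N div m \<le> card {n \<in> {1..N}. n mod m = r} \<and> card {n \<in> {1..N}. n mod m = r} \<le> N div m + 1"
proof (induction N rule: less_induct)
  case (less N)
  show ?case
  proof (cases "N < m")
    case True
    have "{n \<in> {1..N}. n mod m = r} \<subseteq> {n \<in> {0<..0+m}. n mod m = r}" using True by auto
    then have "card {n \<in> {1..N}. n mod m = r} \<le> card {n \<in> {0<..0+m}. n mod m = r}"
      by (intro card_mono) auto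
    also have "\<dots> = 1" using block_card[OF m r] by blast
    finally show ?thesis using True by simp
  next
    case False
    then have Nm: "m \<le> N" by simp
    have split: "{n \<in> {1..N}. n mod m = r} = {n \<in> {1..N-m}. n mod m = r} \<union> {n \<in> {N-m<..N-m+m}. n mod m = r}"
      using Nm by auto
    have disj: "{n \<in> {1..N-m}. n mod m = r} \<inter> {n \<in> {N-m<..N-m+m}. n mod m = r} = {}" by auto
    have "card {n \<in> {1..N}. n mod m = r} = card {n \<in> {1..N-m}. n mod m = r} + 1"
      unfolding split using block_card[OF m r, of "N-m"] disj
      by (subst card_Un_disjoint) auto
    moreover have "N div m = (N - m) div m + 1" using le_div_geq[of m N] m Nm by simp
    moreover have "N - m < N" using m Nm by simp
    ultimately show ?thesis using less.IH[of "N-m"] by simp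
  qed
qed

lemma count_real:
  fixes m r :: nat and y :: real
  assumes m: "m \<ge> 1" and r: "r < m" and y: "y \<ge> 0"
  shows "\<bar>real (card {n \<in> {1..nat \<lfloor>y\<rfloor>}. n mod m = r}) - y / m\<bar> \<le> 2"
proof -
  define N where "N = nat \<lfloor>y\<rfloor>"
  define c where "c = card {n \<in> {1..N}. n mod m = r}"
  have cb: "N div m \<le> c" "c \<le> N div m + 1" using count_bounds[OF m r, of N] unfolding c_def by auto
  have Ny: "real N \<le> y" "y < real N + 1" unfolding N_def using y by linarith+
  have mpos: "real m \<ge> 1" using m by simp
  have d1: "real (N div m) \<le> real N / real m" by (rule of_nat_div_le_of_nat)
  have d2: "real N / real m - 1 < real (N div m)"
  proof -
    have "real N = real (N div m) * real m + real (N mod m)"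
      by (metis of_nat_add of_nat_mult div_mult_mod_eq)
    moreover have "real (N mod m) < real m" using m by simp
    ultimately have "real N < (real (N div m) + 1) * real m" by (simp add: algebra_simps)
    then show ?thesis using mpos by (simp add: field_simps)
  qed
  have e1: "real N / real m \<le> y / real m" using Ny mpos by (intro divide_right_mono) auto
  have e2: "y / real m - 1 \<le> real N / real m"
  proof -
    have "y / real m - real N / real m = (y - real N) / real m" by (simp add: diff_divide_distrib)
    also have "\<dots> \<le> 1 / real m" using Ny mpos by (intro divide_right_mono) auto
    also have "\<dots> \<le> 1" using mpos by simp
    finally show ?thesis by simp
  qed
  have "real c \<ge> real (N div m)" "real c \<le> real (N div m) + 1" using cb by simp_all
  then show ?thesis using d1 d2 e1 e2 unfolding c_def N_def by linarith
qed

lemma count_prog: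
  fixes f d :: nat and y :: real
  assumes f: "f \<ge> 1" and d: "d \<ge> 1" and cop: "coprime f d" and y: "y \<ge> 0"
  shows "\<bar>real (card {n \<in> {1..nat \<lfloor>y\<rfloor>}. [n = 1] (mod f) \<and> d dvd n}) - y / (f * d)\<bar> \<le> 2"
proof -
  obtain x where x: "[x = 1] (mod f)" "[x = 0] (mod d)" using binary_chinese_remainder_nat[OF cop] by blast
  have iff: "([n = 1] (mod f) \<and> d dvd n) \<longleftrightarrow> n mod (f * d) = x mod (f * d)" for n
  proof
    assume "[n = 1] (mod f) \<and> d dvd n"
    then have "[n = x] (mod f)" "[n = x] (mod d)" using x
      by (meson cong_sym cong_trans cong_0_iff)+
    then have "[n = x] (mod f * d)" using cop by (rule coprime_cong_mult_nat)
    then show "n mod (f * d) = x mod (f * d)" by (simp add: cong_def)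
  next
    assume "n mod (f * d) = x mod (f * d)"
    then have h: "[n = x] (mod f * d)" by (simp add: cong_def)
    then have "[n = x] (mod f)" by (rule cong_modulus_mult_nat)
    moreover have "[n = x] (mod d)" using h by (metis cong_modulus_mult_nat mult.commute)
    ultimately show "[n = 1] (mod f) \<and> d dvd n" using x
      by (meson cong_sym cong_trans cong_0_iff)
  qed
  have "{n \<in> {1..nat \<lfloor>y\<rfloor>}. [n = 1] (mod f) \<and> d dvd n} = {n \<in> {1..nat \<lfloor>y\<rfloor>}. n mod (f * d) = x mod (f * d)}"
    using iff by blast
  moreover have "f * d \<ge> 1" using f d by simp
  moreover have "x mod (f * d) < f * d" using f d by simp
  ultimately show ?thesis using count_real[of "f * d" "x mod (f * d)" y] y by simp
qed

lemma geom_bound: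
  fixes q :: real
  assumes "0 \<le> q" "q < 1"
  shows "(\<Sum>k=1..M. q^k) \<le> q / (1 - q)"
proof -
  have eq: "(1 - q) * (\<Sum>k=1..M. q^k) = q - q^Suc M"
  proof (induction M)
    case 0 then show ?case by simp
  next
    case (Suc M)
    have s: "(\<Sum>k=1..Suc M. q^k) = (\<Sum>k=1..M. q^k) + q^Suc M" by (subst sum.cl_ivl_Suc) simp
    have "(1 - q) * (\<Sum>k=1..Suc M. q^k) = (1 - q) * (\<Sum>k=1..M. q^k) + (1 - q) * q^Suc M"
      unfolding s by (rule distrib_left)
    also have "\<dots> = q - q^Suc M + (1 - q) * q^Suc M" using Suc.IH by simp
    also have "\<dots> = q - q^Suc (Suc M)" by (simp add: algebra_simps)
    finally show ?case .
  qed
  have "(1 - q) * (\<Sum>k=1..M. q^k) \<le> q" using eq assms by simp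
  then show ?thesis using assms by (simp add: field_simps)
qed

lemma recip_sum_rad:
  fixes V :: "nat set" and A :: "nat set"
  assumes finV: "finite V" and finA: "finite A" and Vprime: "\<forall>p\<in>V. prime p"
    and pos: "\<forall>n\<in>A. n > 0" and pf: "\<forall>n\<in>A. prime_factors n = V"
  shows "(\<Sum>n\<in>A. 1 / real n) \<le> (\<Prod>p\<in>V. 1 / (real p - 1))"
proof -
  define M where "M = (\<Sum>n\<in>A. \<Sum>p\<in>V. multiplicity p n)"
  have Mb: "multiplicity p n \<le> M" if "n \<in> A" "p \<in> V" for n p
  proof -
    have "multiplicity p n \<le> (\<Sum>p'\<in>V. multiplicity p' n)" using that finV by (intro member_le_sum) auto
    also have "\<dots> \<le> M" unfolding M_def using that finA by (intro member_le_sum) auto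
    finally show ?thesis .
  qed
  define g where "g n = restrict (\<lambda>p. multiplicity p n) V" for n
  define F where "F e = (\<Prod>p\<in>V. (1 / real p) ^ (e p))" for e :: "nat \<Rightarrow> nat"
  have fact: "n = (\<Prod>p\<in>V. p ^ multiplicity p n)" if "n \<in> A" for n
    using prime_factorization_nat[of n] pos pf that by auto
  have inj: "inj_on g A"
  proof (rule inj_onI)
    fix n1 n2 assume n1: "n1 \<in> A" and n2: "n2 \<in> A" and e: "g n1 = g n2"
    have "\<forall>p\<in>V. multiplicity p n1 = multiplicity p n2"
    proof
      fix p assume "p \<in> V"
      then show "multiplicity p n1 = multiplicity p n2" using fun_cong[OF e, of p] unfolding g_def by simp
    qed
    then have "(\<Prod>p\<in>V. p ^ multiplicity p n1) = (\<Prod>p\<in>V. p ^ multiplicity p n2)" by simp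
    then show "n1 = n2" using fact n1 n2 by metis
  qed
  have gmem: "g ` A \<subseteq> PiE V (\<lambda>_. {1..M})"
  proof
    fix e assume "e \<in> g ` A"
    then obtain n where n: "n \<in> A" "e = g n" by auto
    have "\<forall>p\<in>V. multiplicity p n \<in> {1..M}"
    proof
      fix p assume p: "p \<in> V"
      then have "p \<in> prime_factors n" using pf n by auto
      then have "multiplicity p n > 0" by (simp add: prime_factors_multiplicity)
      then show "multiplicity p n \<in> {1..M}" using Mb[OF n(1) p] by auto
    qed
    then show "e \<in> PiE V (\<lambda>_. {1..M})" unfolding n g_def by (simp add: restrict_PiE_iff)
  qed
  have val: "1 / real n = F (g n)" if n: "n \<in> A" for n
  proof -
    have "real n = (\<Prod>p\<in>V. real p ^ multiplicity p n)"
      using fact[OF n] by (metis (no_types, lifting) of_nat_power of_nat_prod prod.cong)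
    then have "1 / real n = (\<Prod>p\<in>V. 1 / real p ^ multiplicity p n)"
      by (simp add: prod_dividef)
    also have "\<dots> = F (g n)" unfolding F_def g_def by (intro prod.cong refl) (simp add: power_one_over)
    finally show ?thesis .
  qed
  have Fnn: "F e \<ge> 0" for e unfolding F_def by (intro prod_nonneg) auto
  have "(\<Sum>n\<in>A. 1 / real n) = (\<Sum>n\<in>A. F (g n))" using val by simp
  also have "\<dots> = (\<Sum>e\<in>g ` A. F e)" using sum.reindex[OF inj, of F] by simp
  also have "\<dots> \<le> (\<Sum>e\<in>PiE V (\<lambda>_. {1..M}). F e)"
    using gmem finV Fnn by (intro sum_mono2 finite_PiE) auto
  also have "\<dots> = (\<Prod>p\<in>V. \<Sum>k\<in>{1..M}. (1 / real p) ^ k)"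
    unfolding F_def using finV by (subst prod_sum_PiE) auto
  also have "\<dots> \<le> (\<Prod>p\<in>V. 1 / (real p - 1))"
  proof (intro prod_mono conjI)
    fix p assume p: "p \<in> V"
    then have p2: "real p \<ge> 2" using Vprime prime_ge_2_nat by force
    show "0 \<le> (\<Sum>k\<in>{1..M}. (1 / real p) ^ k)" by (intro sum_nonneg) auto
    have "(\<Sum>k\<in>{1..M}. (1 / real p) ^ k) \<le> (1 / real p) / (1 - 1 / real p)"
      using p2 by (intro geom_bound) auto
    also have "\<dots> = 1 / (real p - 1)" using p2 by (simp add: field_simps)
    finally show "(\<Sum>k\<in>{1..M}. (1 / real p) ^ k) \<le> 1 / (real p - 1)" .
  qed
  finally show ?thesis .
qed

lemma phi_primes_pos:
  fixes V :: "nat set"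
  assumes "\<forall>p\<in>V. prime p"
  shows "(\<Prod>p\<in>V. real p - 1) > 0"
proof (intro prod_pos)
  fix p assume "p \<in> V"
  then have "p \<ge> 2" using assms prime_ge_2_nat by auto
  then show "real p - 1 > 0" by simp
qed

locale sieve =
  fixes f :: nat and z :: real
  assumes f1: "f \<ge> 1" and z1: "z \<ge> 1"
begin

definition "P = {p. prime p \<and> real p \<le> z \<and> \<not> p dvd f}"
definition "D = {S. S \<subseteq> P \<and> real ((\<Prod>p\<in>S. p)) \<le> z}"
definition "phi S = (\<Prod>p\<in>S. real p - 1)"
definition "G = (\<Sum>S\<in>D. 1 / phi S)"
definition "u R = (if R \<in> D then (-1)^card R / (phi R * G) else 0)"
definition "lam S = real ((\<Prod>p\<in>S. p)) * (\<Sum>R\<in>{R\<in>D. S \<subseteq> R}. (-1)^card (R - S) * u R)"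

lemma finite_P: "finite P"
proof -
  have "P \<subseteq> {..nat \<lfloor>z\<rfloor>}" unfolding P_def by (auto simp: le_nat_floor)
  then show ?thesis by (rule finite_subset) simp
qed

lemma finite_D: "finite D"
proof -
  have "D \<subseteq> Pow P" unfolding D_def by auto
  then show ?thesis using finite_P by (simp add: finite_subset)
qed

lemma D_sub: "S \<in> D \<Longrightarrow> S \<subseteq> P" unfolding D_def by auto

lemma D_fin: "S \<in> D \<Longrightarrow> finite S" using D_sub finite_P finite_subset by blast

lemma P_prime: "p \<in> P \<Longrightarrow> prime p" unfolding P_def by auto

lemma prodS_pos: "S \<subseteq> P \<Longrightarrow> (\<Prod>p\<in>S. p) > 0"
  using P_prime prime_gt_0_nat by (metis prod_pos subset_eq)

lemma D_down: assumes "S \<in> D" "T \<subseteq> S" shows "T \<in> D"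
proof -
  have "(\<Prod>p\<in>T. p) dvd (\<Prod>p\<in>S. p)" using assms D_fin by (intro prod_dvd_prod_subset) auto
  then have "(\<Prod>p\<in>T. p) \<le> (\<Prod>p\<in>S. p)" using prodS_pos[OF D_sub[OF assms(1)]] by (intro dvd_imp_le) auto
  then have "real (\<Prod>p\<in>T. p) \<le> real (\<Prod>p\<in>S. p)" by (simp only: of_nat_le_iff)
  then show ?thesis using assms unfolding D_def by auto
qed

lemma empty_D: "{} \<in> D" unfolding D_def using z1 by auto

lemma phi_pos: "S \<subseteq> P \<Longrightarrow> phi S > 0"
  unfolding phi_def
proof (intro prod_pos)
  fix p assume "S \<subseteq> P" "p \<in> S"
  then have "prime p" using P_prime by auto
  then have "p \<ge> 2" by (rule prime_ge_2_nat)
  then show "real p - 1 > 0" by simp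
qed

lemma G_ge1: "G \<ge> 1"
proof -
  have "G = 1 / phi {} + (\<Sum>S\<in>D - {{}}. 1 / phi S)"
    unfolding G_def using finite_D empty_D by (simp add: sum.remove)
  moreover have "(\<Sum>S\<in>D - {{}}. 1 / phi S) \<ge> 0"
    using phi_pos D_sub by (intro sum_nonneg) (auto intro: less_imp_le)
  ultimately show ?thesis by (simp add: phi_def)
qed

lemma G_pos: "G > 0" using G_ge1 by simp

lemma lam_empty: "lam {} = 1"
proof -
  have "lam {} = (\<Sum>R\<in>D. (-1)^card R * ((-1)^card R / (phi R * G)))"
    unfolding lam_def u_def by (auto intro!: sum.cong)
  also have "\<dots> = (\<Sum>R\<in>D. 1 / phi R / G)"
    by (intro sum.cong refl) (simp add: power_mult_distrib[symmetric])
  also have "\<dots> = (\<Sum>R\<in>D. 1 / phi R) / G" by (simp add: sum_divide_distrib)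
  also have "\<dots> = 1" using G_pos unfolding G_def by simp
  finally show ?thesis .
qed

lemma inv_formula:
  assumes "T \<in> D"
  shows "(\<Sum>S\<in>{S\<in>D. T \<subseteq> S}. lam S / real ((\<Prod>p\<in>S. p))) = u T"
proof -
  have "(\<Sum>S\<in>{S\<in>D. T \<subseteq> S}. lam S / real ((\<Prod>p\<in>S. p)))
      = (\<Sum>S\<in>{S\<in>D. T \<subseteq> S}. \<Sum>R\<in>{R\<in>D. S \<subseteq> R}. (-1)^card (R - S) * u R)"
  proof (intro sum.cong refl)
    fix S assume "S \<in> {S\<in>D. T \<subseteq> S}"
    then have "real (\<Prod>p\<in>S. p) \<noteq> 0" using prodS_pos D_sub by (metis CollectD of_nat_0_less_iff order_less_irrefl)
    then show "lam S / real (\<Prod>p\<in>S. p) = (\<Sum>R\<in>{R\<in>D. S \<subseteq> R}. (-1)^card (R - S) * u R)"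
      unfolding lam_def by simp
  qed
  also have "\<dots> = (\<Sum>R\<in>D. \<Sum>S\<in>{S\<in>{S\<in>D. T \<subseteq> S}. S \<subseteq> R}. (-1)^card (R - S) * u R)"
    using finite_D by (intro sum.swap_restrict) auto
  also have "\<dots> = (\<Sum>R\<in>D. if R = T then u R else 0)"
  proof (intro sum.cong refl)
    fix R assume R: "R \<in> D"
    show "(\<Sum>S\<in>{S\<in>{S\<in>D. T \<subseteq> S}. S \<subseteq> R}. (-1)^card (R - S) * u R) = (if R = T then u R else 0)"
    proof (cases "T \<subseteq> R")
      case True
      have eq: "{S\<in>{S\<in>D. T \<subseteq> S}. S \<subseteq> R} = {S. T \<subseteq> S \<and> S \<subseteq> R}"
        using R D_down by auto
      show ?thesis unfolding eq sum_distrib_right[symmetric]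
        using alt_sum_interval[OF D_fin[OF R] True] by simp
    next
      case False
      then have eq: "{S\<in>{S\<in>D. T \<subseteq> S}. S \<subseteq> R} = {}" by auto
      show ?thesis unfolding eq using False by auto
    qed
  qed
  also have "\<dots> = u T" using assms finite_D by simp
  finally show ?thesis .
qed

lemma u_alt: assumes "T \<in> D" shows "u T = (\<Sum>S\<in>D. if T \<subseteq> S then lam S / real (\<Prod>p\<in>S. p) else 0)"
  using inv_formula[OF assms] by (simp only: sum.inter_filter[OF finite_D])

lemma lcm_identity:
  assumes S1: "S1 \<in> D" and S2: "S2 \<in> D"
  shows "1 / real (\<Prod>p\<in>S1 \<union> S2. p)
       = (\<Sum>T\<in>D. if T \<subseteq> S1 \<and> T \<subseteq> S2 then phi T else 0) / (real (\<Prod>p\<in>S1. p) * real (\<Prod>p\<in>S2. p))"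
proof -
  have fin1: "finite S1" and fin2: "finite S2" using S1 S2 D_fin by auto
  have h1: "real (\<Prod>p\<in>S1 \<union> S2. p) * real (\<Prod>p\<in>S1 \<inter> S2. p) = real (\<Prod>p\<in>S1. p) * real (\<Prod>p\<in>S2. p)"
    using prod.union_inter[OF fin1 fin2, of "\<lambda>p. p"] by (metis of_nat_mult)
  have "real (\<Prod>p\<in>S1 \<inter> S2. p) = (\<Prod>p\<in>S1 \<inter> S2. (real p - 1) + 1)" by simp
  also have "\<dots> = (\<Sum>X\<in>Pow (S1 \<inter> S2). (\<Prod>p\<in>X. real p - 1) * (\<Prod>p\<in>S1 \<inter> S2 - X. 1))"
    using fin1 by (intro prod_add) auto
  also have "\<dots> = (\<Sum>T\<in>Pow (S1 \<inter> S2). phi T)" unfolding phi_def by simp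
  finally have h2: "real (\<Prod>p\<in>S1 \<inter> S2. p) = (\<Sum>T\<in>Pow (S1 \<inter> S2). phi T)" .
  have "(\<Sum>T\<in>D. if T \<subseteq> S1 \<and> T \<subseteq> S2 then phi T else 0) = (\<Sum>T\<in>D. if T \<in> Pow (S1 \<inter> S2) then phi T else 0)"
    by (intro sum.cong) auto
  also have "\<dots> = (\<Sum>T\<in>D \<inter> Pow (S1 \<inter> S2). phi T)"
    using finite_D by (simp add: sum.inter_restrict)
  also have "D \<inter> Pow (S1 \<inter> S2) = Pow (S1 \<inter> S2)" using D_down S1 by blast
  finally have h3: "(\<Sum>T\<in>D. if T \<subseteq> S1 \<and> T \<subseteq> S2 then phi T else 0) = real (\<Prod>p\<in>S1 \<inter> S2. p)"
    using h2 by simp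
  have pos: "real (\<Prod>p\<in>S1 \<union> S2. p) > 0" using prodS_pos D_sub S1 S2
    by (metis Un_subset_iff of_nat_0_less_iff)
  have pos1: "real (\<Prod>p\<in>S1. p) > 0" "real (\<Prod>p\<in>S2. p) > 0" using prodS_pos D_sub S1 S2
    by (metis of_nat_0_less_iff)+
  show ?thesis unfolding h3 using h1 pos pos1
    by (simp add: field_simps)
qed

definition "Qsum = (\<Sum>S1\<in>D. \<Sum>S2\<in>D. lam S1 * lam S2 / real (\<Prod>p\<in>S1 \<union> S2. p))"

lemma Qsum_eq: "Qsum = 1 / G"
proof -
  define a where "a T S = (if T \<subseteq> S then lam S / real (\<Prod>p\<in>S. p) else 0)" for T S
  have "(\<Sum>T\<in>D. phi T * (u T)^2) = (\<Sum>T\<in>D. phi T * ((\<Sum>S2\<in>D. a T S2) * (\<Sum>S1\<in>D. a T S1)))"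
    by (intro sum.cong refl) (simp add: u_alt a_def power2_eq_square)
  also have "\<dots> = (\<Sum>T\<in>D. \<Sum>S1\<in>D. \<Sum>S2\<in>D. phi T * (a T S2 * a T S1))"
    by (simp add: sum_distrib_left sum_distrib_right mult.assoc)
  also have "\<dots> = (\<Sum>S1\<in>D. \<Sum>T\<in>D. \<Sum>S2\<in>D. phi T * (a T S2 * a T S1))"
    by (rule sum.swap)
  also have "\<dots> = (\<Sum>S1\<in>D. \<Sum>S2\<in>D. \<Sum>T\<in>D. phi T * (a T S2 * a T S1))"
    by (intro sum.cong refl sum.swap)
  also have "\<dots> = (\<Sum>S1\<in>D. \<Sum>S2\<in>D. lam S1 * lam S2 / real (\<Prod>p\<in>S1 \<union> S2. p))"
  proof (intro sum.cong refl)
    fix S1 S2 assume S1: "S1 \<in> D" and S2: "S2 \<in> D"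
    have "(\<Sum>T\<in>D. phi T * (a T S2 * a T S1))
        = (\<Sum>T\<in>D. (lam S1 * lam S2 / (real (\<Prod>p\<in>S1. p) * real (\<Prod>p\<in>S2. p))) * (if T \<subseteq> S1 \<and> T \<subseteq> S2 then phi T else 0))"
      by (intro sum.cong refl) (simp add: a_def ac_simps)
    also have "\<dots> = lam S1 * lam S2 * ((\<Sum>T\<in>D. if T \<subseteq> S1 \<and> T \<subseteq> S2 then phi T else 0) / (real (\<Prod>p\<in>S1. p) * real (\<Prod>p\<in>S2. p)))"
      by (simp add: sum_distrib_left[symmetric] sum_divide_distrib[symmetric])
    also have "\<dots> = lam S1 * lam S2 * (1 / real (\<Prod>p\<in>S1 \<union> S2. p))"
      by (simp only: lcm_identity[OF S1 S2])
    also have "\<dots> = lam S1 * lam S2 / real (\<Prod>p\<in>S1 \<union> S2. p)" by simp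
    finally show "(\<Sum>T\<in>D. phi T * (a T S2 * a T S1)) = lam S1 * lam S2 / real (\<Prod>p\<in>S1 \<union> S2. p)" .
  qed
  finally have 1: "Qsum = (\<Sum>T\<in>D. phi T * (u T)^2)" unfolding Qsum_def by simp
  have "(\<Sum>T\<in>D. phi T * (u T)^2) = (\<Sum>T\<in>D. (1 / phi T) / G^2)"
  proof (intro sum.cong refl)
    fix T assume T: "T \<in> D"
    have "phi T > 0" using phi_pos D_sub T by auto
    then show "phi T * (u T)^2 = (1 / phi T) / G^2" using T G_pos
      by (simp add: u_def power_divide power_mult_distrib[symmetric] field_simps power2_eq_square)
  qed
  also have "\<dots> = G / G^2" unfolding G_def by (simp add: sum_divide_distrib)
  also have "\<dots> = 1 / G" using G_pos by (simp add: power2_eq_square)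
  finally show ?thesis using 1 by simp
qed

lemma lam_bound: assumes "S \<in> D" shows "\<bar>lam S\<bar> \<le> z"
proof -
  have "\<bar>\<Sum>R\<in>{R\<in>D. S \<subseteq> R}. (-1)^card (R - S) * u R\<bar> \<le> (\<Sum>R\<in>{R\<in>D. S \<subseteq> R}. \<bar>(-1)^card (R - S) * u R\<bar>)"
    by (rule sum_abs)
  also have "\<dots> \<le> (\<Sum>R\<in>D. \<bar>(-1)^card (R - S) * u R\<bar>)"
    using finite_D by (intro sum_mono2) auto
  also have "\<dots> = (\<Sum>R\<in>D. 1 / phi R / G)"
  proof (intro sum.cong refl)
    fix R assume R: "R \<in> D"
    have "phi R > 0" using phi_pos D_sub R by auto
    then show "\<bar>(-1)^card (R - S) * u R\<bar> = 1 / phi R / G" using R G_pos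
      by (simp add: u_def abs_mult power_abs)
  qed
  also have "\<dots> = (\<Sum>R\<in>D. 1 / phi R) / G" by (simp add: sum_divide_distrib)
  also have "\<dots> = 1" using G_pos unfolding G_def by simp
  finally have 1: "\<bar>\<Sum>R\<in>{R\<in>D. S \<subseteq> R}. (-1)^card (R - S) * u R\<bar> \<le> 1" .
  have 2: "real (\<Prod>p\<in>S. p) \<le> z" using assms unfolding D_def by auto
  have "\<bar>lam S\<bar> = real (\<Prod>p\<in>S. p) * \<bar>\<Sum>R\<in>{R\<in>D. S \<subseteq> R}. (-1)^card (R - S) * u R\<bar>"
    unfolding lam_def by (simp only: abs_mult abs_of_nat)
  also have "\<dots> \<le> real (\<Prod>p\<in>S. p) * 1" using 1 by (intro mult_left_mono) (auto intro: prod_nonneg)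
  finally show ?thesis using 2 by simp
qed

lemma card_D: "real (card D) \<le> z"
proof -
  have inj: "inj_on (\<lambda>S. \<Prod>p\<in>S. p) D"
  proof (rule inj_onI)
    fix S1 S2 assume "S1 \<in> D" "S2 \<in> D" "(\<Prod>p\<in>S1. p) = (\<Prod>p\<in>S2. p)"
    then show "S1 = S2" using prime_factors_prod_primes D_fin D_sub P_prime
      by (metis subsetD)
  qed
  have "(\<lambda>S. \<Prod>p\<in>S. p) ` D \<subseteq> {1..nat \<lfloor>z\<rfloor>}"
  proof
    fix n assume "n \<in> (\<lambda>S. \<Prod>p\<in>S. p) ` D"
    then obtain S where S: "S \<in> D" "n = (\<Prod>p\<in>S. p)" by auto
    then have "n > 0" using prodS_pos D_sub by auto
    moreover have "real n \<le> z" using S unfolding D_def by auto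
    ultimately show "n \<in> {1..nat \<lfloor>z\<rfloor>}" by (auto simp: le_nat_floor)
  qed
  then have "card ((\<lambda>S. \<Prod>p\<in>S. p) ` D) \<le> nat \<lfloor>z\<rfloor>"
    by (metis card_atLeastAtMost card_mono diff_Suc_1 finite_atLeastAtMost)
  then have "card D \<le> nat \<lfloor>z\<rfloor>" using card_image[OF inj] by simp
  then have "real (card D) \<le> real (nat \<lfloor>z\<rfloor>)" by (simp only: of_nat_le_iff)
  also have "real (nat \<lfloor>z\<rfloor>) \<le> z" using z1 of_int_floor_le[of z] by (simp add: of_nat_nat)
  finally show ?thesis .
qed

lemma dvd_union_iff:
  assumes S1: "S1 \<in> D" and S2: "S2 \<in> D"
  shows "((\<Prod>p\<in>S1. p) dvd n \<and> (\<Prod>p\<in>S2. p) dvd n) \<longleftrightarrow> (\<Prod>p\<in>S1 \<union> S2. p) dvd n"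
proof
  assume h: "(\<Prod>p\<in>S1. p) dvd n \<and> (\<Prod>p\<in>S2. p) dvd n"
  have "\<forall>p\<in>S1 \<union> S2. p dvd n"
  proof
    fix p assume "p \<in> S1 \<union> S2"
    then show "p dvd n"
    proof
      assume "p \<in> S1"
      then have "p dvd (\<Prod>p\<in>S1. p)" using D_fin[OF S1] by (intro dvd_prodI)
      then show ?thesis using h by (meson dvd_trans)
    next
      assume "p \<in> S2"
      then have "p dvd (\<Prod>p\<in>S2. p)" using D_fin[OF S2] by (intro dvd_prodI)
      then show ?thesis using h by (meson dvd_trans)
    qed
  qed
  moreover have "\<forall>p\<in>S1 \<union> S2. prime p" using S1 S2 D_sub P_prime by blast
  ultimately show "(\<Prod>p\<in>S1 \<union> S2. p) dvd n" using D_fin S1 S2 by (intro prod_primes_dvd) auto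
next
  assume h: "(\<Prod>p\<in>S1 \<union> S2. p) dvd n"
  have fin: "finite (S1 \<union> S2)" using D_fin S1 S2 by auto
  have "(\<Prod>p\<in>S1. p) dvd (\<Prod>p\<in>S1 \<union> S2. p)" "(\<Prod>p\<in>S2. p) dvd (\<Prod>p\<in>S1 \<union> S2. p)"
    using fin by (auto intro: prod_dvd_prod_subset)
  then show "(\<Prod>p\<in>S1. p) dvd n \<and> (\<Prod>p\<in>S2. p) dvd n" using h by (meson dvd_trans)
qed

lemma coprime_f_prod: "S \<subseteq> P \<Longrightarrow> coprime f (\<Prod>p\<in>S. p)"
proof (intro prod_coprime_right)
  fix p assume "S \<subseteq> P" "p \<in> S"
  then have "prime p" "\<not> p dvd f" unfolding P_def by auto
  then show "coprime f p" using prime_imp_coprime by (metis coprime_commute)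
qed

lemma W_prime:
  assumes p: "prime p" "z < real p"
  shows "(\<Sum>S\<in>D. if (\<Prod>q\<in>S. q) dvd p then lam S else 0) = 1"
proof -
  have "(\<Sum>S\<in>D. if (\<Prod>q\<in>S. q) dvd p then lam S else 0) = (\<Sum>S\<in>D. if S = {} then lam S else 0)"
  proof (intro sum.cong refl)
    fix S assume S: "S \<in> D"
    have "\<not> (\<Prod>q\<in>S. q) dvd p" if ne: "S \<noteq> {}"
    proof
      assume dv: "(\<Prod>q\<in>S. q) dvd p"
      obtain q where q: "q \<in> S" using ne by auto
      have "q dvd (\<Prod>q\<in>S. q)" using D_fin[OF S] q by (intro dvd_prodI)
      then have "q dvd p" using dv by (rule dvd_trans)
      moreover have "prime q" using q S D_sub P_prime by auto
      ultimately have "q = p" using p by (intro primes_dvd_imp_eq)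
      moreover have "real q \<le> z" using q S D_sub unfolding P_def by auto
      ultimately show False using p by simp
    qed
    then show "(if (\<Prod>q\<in>S. q) dvd p then lam S else 0) = (if S = {} then lam S else 0)" by auto
  qed
  also have "\<dots> = lam {}" using finite_D empty_D by simp
  finally show ?thesis using lam_empty by simp
qed

lemma sieve_main:
  assumes y: "y \<ge> 0"
  shows "real (card {p \<in> {1..nat \<lfloor>y\<rfloor>}. [p = 1] (mod f) \<and> prime p \<and> z < real p})
         \<le> y / f * Qsum + 2 * (\<Sum>S\<in>D. \<bar>lam S\<bar>)^2"
proof -
  define A where "A = {n \<in> {1..nat \<lfloor>y\<rfloor>}. [n = 1] (mod f)}"
  define B where "B = {p \<in> {1..nat \<lfloor>y\<rfloor>}. [p = 1] (mod f) \<and> prime p \<and> z < real p}"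
  define W where "W n = (\<Sum>S\<in>D. if (\<Prod>q\<in>S. q) dvd n then lam S else 0)" for n :: nat
  define cnt where "cnt S1 S2 = real (card {n \<in> A. (\<Prod>p\<in>S1 \<union> S2. p) dvd n})" for S1 S2
  have finA: "finite A" unfolding A_def by simp
  have BA: "B \<subseteq> A" unfolding A_def B_def by auto
  have "real (card B) = (\<Sum>p\<in>B. (W p)^2)"
    unfolding W_def using W_prime unfolding B_def by simp
  also have "\<dots> \<le> (\<Sum>n\<in>A. (W n)^2)" using BA finA by (intro sum_mono2) auto
  also have "\<dots> = (\<Sum>n\<in>A. \<Sum>S1\<in>D. \<Sum>S2\<in>D. if (\<Prod>p\<in>S1 \<union> S2. p) dvd n then lam S1 * lam S2 else 0)"
  proof (intro sum.cong refl)
    fix n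
    have "(W n)^2 = (\<Sum>S1\<in>D. \<Sum>S2\<in>D. (if (\<Prod>q\<in>S1. q) dvd n then lam S1 else 0) * (if (\<Prod>q\<in>S2. q) dvd n then lam S2 else 0))"
      unfolding W_def power2_eq_square by (simp add: sum_product)
    also have "\<dots> = (\<Sum>S1\<in>D. \<Sum>S2\<in>D. if (\<Prod>p\<in>S1 \<union> S2. p) dvd n then lam S1 * lam S2 else 0)"
    proof (intro sum.cong refl)
      fix S1 S2 assume "S1 \<in> D" "S2 \<in> D"
      then show "(if (\<Prod>q\<in>S1. q) dvd n then lam S1 else 0) * (if (\<Prod>q\<in>S2. q) dvd n then lam S2 else 0)
          = (if (\<Prod>p\<in>S1 \<union> S2. p) dvd n then lam S1 * lam S2 else 0)"
        using dvd_union_iff[of S1 S2 n] by auto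
    qed
    finally show "(W n)^2 = \<dots>" .
  qed
  also have "\<dots> = (\<Sum>S1\<in>D. \<Sum>n\<in>A. \<Sum>S2\<in>D. if (\<Prod>p\<in>S1 \<union> S2. p) dvd n then lam S1 * lam S2 else 0)"
    by (rule sum.swap)
  also have "\<dots> = (\<Sum>S1\<in>D. \<Sum>S2\<in>D. \<Sum>n\<in>A. if (\<Prod>p\<in>S1 \<union> S2. p) dvd n then lam S1 * lam S2 else 0)"
    by (intro sum.cong refl sum.swap)
  also have "\<dots> = (\<Sum>S1\<in>D. \<Sum>S2\<in>D. lam S1 * lam S2 * cnt S1 S2)"
  proof (intro sum.cong refl)
    fix S1 S2
    have "(\<Sum>n\<in>A. if (\<Prod>p\<in>S1 \<union> S2. p) dvd n then lam S1 * lam S2 else 0)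
        = (\<Sum>n\<in>{n \<in> A. (\<Prod>p\<in>S1 \<union> S2. p) dvd n}. lam S1 * lam S2)"
      by (simp only: sum.inter_filter[OF finA])
    also have "\<dots> = lam S1 * lam S2 * cnt S1 S2" unfolding cnt_def by simp
    finally show "(\<Sum>n\<in>A. if (\<Prod>p\<in>S1 \<union> S2. p) dvd n then lam S1 * lam S2 else 0) = lam S1 * lam S2 * cnt S1 S2" .
  qed
  also have "\<dots> \<le> (\<Sum>S1\<in>D. \<Sum>S2\<in>D. y / f * (lam S1 * lam S2 / real (\<Prod>p\<in>S1 \<union> S2. p)) + 2 * (\<bar>lam S1\<bar> * \<bar>lam S2\<bar>))"
  proof (intro sum_mono)
    fix S1 S2 assume S1: "S1 \<in> D" and S2: "S2 \<in> D"
    define d where "d = (\<Prod>p\<in>S1 \<union> S2. p)"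
    have sub: "S1 \<union> S2 \<subseteq> P" using S1 S2 D_sub by auto
    have d1: "d \<ge> 1" unfolding d_def using prodS_pos[OF sub] by simp
    have cop: "coprime f d" unfolding d_def using coprime_f_prod[OF sub] .
    have "cnt S1 S2 = real (card {n \<in> {1..nat \<lfloor>y\<rfloor>}. [n = 1] (mod f) \<and> d dvd n})"
      unfolding cnt_def A_def d_def by (simp add: conj_assoc)
    then have c: "\<bar>cnt S1 S2 - y / (f * d)\<bar> \<le> 2" using count_prog[OF f1 d1 cop y] by simp
    have "lam S1 * lam S2 * cnt S1 S2 = lam S1 * lam S2 * (y / (f * d)) + lam S1 * lam S2 * (cnt S1 S2 - y / (f * d))"
      by (simp add: algebra_simps)
    also have "lam S1 * lam S2 * (cnt S1 S2 - y / (f * d)) \<le> \<bar>lam S1 * lam S2\<bar> * 2"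
    proof -
      have "lam S1 * lam S2 * (cnt S1 S2 - y / (f * d)) \<le> \<bar>lam S1 * lam S2 * (cnt S1 S2 - y / (f * d))\<bar>" by (rule abs_ge_self)
      also have "\<dots> = \<bar>lam S1 * lam S2\<bar> * \<bar>cnt S1 S2 - y / (f * d)\<bar>" by (simp add: abs_mult)
      also have "\<dots> \<le> \<bar>lam S1 * lam S2\<bar> * 2" using c by (intro mult_left_mono) auto
      finally show ?thesis .
    qed
    finally show "lam S1 * lam S2 * cnt S1 S2 \<le> y / f * (lam S1 * lam S2 / real (\<Prod>p\<in>S1 \<union> S2. p)) + 2 * (\<bar>lam S1\<bar> * \<bar>lam S2\<bar>)"
      unfolding d_def by (simp add: abs_mult field_simps)
  qed
  also have "\<dots> = y / f * Qsum + 2 * (\<Sum>S\<in>D. \<bar>lam S\<bar>)^2"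
  proof -
    have a: "(\<Sum>S1\<in>D. \<Sum>S2\<in>D. y / f * (lam S1 * lam S2 / real (\<Prod>p\<in>S1 \<union> S2. p)) + 2 * (\<bar>lam S1\<bar> * \<bar>lam S2\<bar>))
       = (\<Sum>S1\<in>D. \<Sum>S2\<in>D. y / f * (lam S1 * lam S2 / real (\<Prod>p\<in>S1 \<union> S2. p))) + (\<Sum>S1\<in>D. \<Sum>S2\<in>D. 2 * (\<bar>lam S1\<bar> * \<bar>lam S2\<bar>))"
      by (simp add: sum.distrib)
    have b: "(\<Sum>S1\<in>D. \<Sum>S2\<in>D. y / f * (lam S1 * lam S2 / real (\<Prod>p\<in>S1 \<union> S2. p))) = y / f * Qsum"
      unfolding Qsum_def by (simp add: sum_distrib_left)
    have c: "(\<Sum>S1\<in>D. \<Sum>S2\<in>D. 2 * (\<bar>lam S1\<bar> * \<bar>lam S2\<bar>)) = 2 * (\<Sum>S\<in>D. \<bar>lam S\<bar>)^2"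
    proof -
      have "(\<Sum>S\<in>D. \<bar>lam S\<bar>)^2 = (\<Sum>S1\<in>D. \<Sum>S2\<in>D. \<bar>lam S1\<bar> * \<bar>lam S2\<bar>)"
        by (simp only: power2_eq_square sum_product)
      then show ?thesis by (simp add: sum_distrib_left)
    qed
    show ?thesis using a b c by simp
  qed
  finally show ?thesis unfolding B_def .
qed

lemma G_lower: "ln z \<le> real f / real (totient f) * G"
proof -
  define F where "F = prime_factors f"
  have finF: "finite F" unfolding F_def by simp
  have Fprime: "\<forall>p\<in>F. prime p" unfolding F_def by auto
  have fpos: "f > 0" using f1 by simp
  have tot: "real f / real (totient f) = (\<Sum>U\<in>Pow F. 1 / phi U)"
  proof -
    have p2: "real p \<ge> 2" if "p \<in> F" for p using Fprime that prime_ge_2_nat by force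
    have "real (totient f) = real f * (\<Prod>p\<in>F. 1 - 1 / real p)" unfolding F_def by (rule totient_formula2)
    then have "real f / real (totient f) = 1 / (\<Prod>p\<in>F. 1 - 1 / real p)" using fpos by simp
    also have "\<dots> = (\<Prod>p\<in>F. 1 / (1 - 1 / real p))" by (simp add: prod_dividef)
    also have "\<dots> = (\<Prod>p\<in>F. 1 / (real p - 1) + 1)"
    proof (intro prod.cong refl)
      fix p assume "p \<in> F"
      then have "real p \<ge> 2" by (rule p2)
      then show "1 / (1 - 1 / real p) = 1 / (real p - 1) + 1" by (simp add: field_simps)
    qed
    also have "\<dots> = (\<Sum>U\<in>Pow F. (\<Prod>p\<in>U. 1 / (real p - 1)) * (\<Prod>p\<in>F - U. 1))"
      using finF by (rule prod_add)
    also have "\<dots> = (\<Sum>U\<in>Pow F. 1 / phi U)" unfolding phi_def by (simp add: prod_dividef)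
    finally show ?thesis .
  qed
  have disj: "U \<inter> S = {}" if "U \<in> Pow F" "S \<in> D" for U S
  proof -
    have "p \<in> F \<Longrightarrow> p dvd f" for p unfolding F_def by (simp add: in_prime_factors_iff)
    moreover have "p \<in> S \<Longrightarrow> \<not> p dvd f" for p using that D_sub unfolding P_def by auto
    ultimately show ?thesis using that by auto
  qed
  have finU: "finite U" if "U \<in> Pow F" for U using that finF finite_subset by auto
  have prodG: "(\<Sum>U\<in>Pow F. 1 / phi U) * G = (\<Sum>(U, S)\<in>Pow F \<times> D. 1 / phi (U \<union> S))"
  proof -
    have "(\<Sum>U\<in>Pow F. 1 / phi U) * G = (\<Sum>U\<in>Pow F. \<Sum>S\<in>D. 1 / phi U * (1 / phi S))"
      unfolding G_def by (rule sum_product)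
    also have "\<dots> = (\<Sum>U\<in>Pow F. \<Sum>S\<in>D. 1 / phi (U \<union> S))"
    proof (intro sum.cong refl)
      fix U S assume U: "U \<in> Pow F" and S: "S \<in> D"
      have "phi (U \<union> S) = phi U * phi S" unfolding phi_def
        using finU[OF U] D_fin[OF S] disj[OF U S] by (rule prod.union_disjoint)
      then show "1 / phi U * (1 / phi S) = 1 / phi (U \<union> S)" by simp
    qed
    also have "\<dots> = (\<Sum>(U, S)\<in>Pow F \<times> D. 1 / phi (U \<union> S))"
      by (rule sum.cartesian_product)
    finally show ?thesis .
  qed
  define Z where "Z = {p. prime p \<and> real p \<le> z}"
  define E where "E = {V. V \<subseteq> Z \<and> real (\<Prod>p\<in>V. p) \<le> z}"
  have finZ: "finite Z"
  proof -
    have "Z \<subseteq> {..nat \<lfloor>z\<rfloor>}" unfolding Z_def by (auto simp: le_nat_floor)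
    then show ?thesis by (rule finite_subset) simp
  qed
  have finE: "finite E" unfolding E_def using finZ by (auto intro: finite_subset[of _ "Pow Z"])
  have Eprime: "\<forall>p\<in>V. prime p" if "V \<in> E" for V using that unfolding E_def Z_def by auto
  have finV: "finite V" if "V \<in> E" for V using that finZ finite_subset unfolding E_def by auto
  have phiE_pos: "phi V > 0" if "\<forall>p\<in>V. prime p" for V
    unfolding phi_def using phi_primes_pos[OF that] .
  have ge: "(\<Sum>V\<in>E. 1 / phi V) \<le> (\<Sum>(U, S)\<in>Pow F \<times> D. 1 / phi (U \<union> S))"
  proof -
    define h where "h V = (V \<inter> F, V - F)" for V :: "nat set"
    have inj: "inj_on h E" unfolding h_def by (rule inj_onI) auto
    have img: "h ` E \<subseteq> Pow F \<times> D"
    proof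
      fix x assume "x \<in> h ` E"
      then obtain V where V: "V \<in> E" "x = h V" by auto
      have sub: "V - F \<subseteq> P"
      proof
        fix p assume p: "p \<in> V - F"
        then have "prime p" "real p \<le> z" using V unfolding E_def Z_def by auto
        moreover have "\<not> p dvd f" using p fpos \<open>prime p\<close> unfolding F_def by (auto simp: in_prime_factors_iff)
        ultimately show "p \<in> P" unfolding P_def by auto
      qed
      have "(\<Prod>p\<in>V - F. p) dvd (\<Prod>p\<in>V. p)" using finV[OF V(1)] by (intro prod_dvd_prod_subset) auto
      moreover have "(\<Prod>p\<in>V. p) > 0" using Eprime[OF V(1)] prime_gt_0_nat by (metis prod_pos)
      ultimately have "(\<Prod>p\<in>V - F. p) \<le> (\<Prod>p\<in>V. p)" by (intro dvd_imp_le)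
      then have "real (\<Prod>p\<in>V - F. p) \<le> real (\<Prod>p\<in>V. p)" by (simp only: of_nat_le_iff)
      then have "V - F \<in> D" using sub V unfolding D_def E_def by auto
      then show "x \<in> Pow F \<times> D" using V unfolding h_def by auto
    qed
    have "(\<Sum>V\<in>E. 1 / phi V) = (\<Sum>V\<in>E. (\<lambda>(U, S). 1 / phi (U \<union> S)) (h V))"
    proof (intro sum.cong refl)
      fix V :: "nat set"
      have "V \<inter> F \<union> (V - F) = V" by blast
      then show "1 / phi V = (\<lambda>(U, S). 1 / phi (U \<union> S)) (h V)" unfolding h_def by simp
    qed
    also have "\<dots> = (\<Sum>x\<in>h ` E. (\<lambda>(U, S). 1 / phi (U \<union> S)) x)"
      using sum.reindex[OF inj, of "\<lambda>(U, S). 1 / phi (U \<union> S)"] by (simp add: comp_def)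
    also have "\<dots> \<le> (\<Sum>(U, S)\<in>Pow F \<times> D. 1 / phi (U \<union> S))"
    proof (intro sum_mono2 img)
      show "finite (Pow F \<times> D)" using finF finite_D by simp
      fix x assume "x \<in> Pow F \<times> D - h ` E"
      then obtain U S where x: "x = (U, S)" "U \<subseteq> F" "S \<in> D" by auto
      have "\<forall>p\<in>U \<union> S. prime p" using x Fprime D_sub P_prime by blast
      then show "0 \<le> (\<lambda>(U, S). 1 / phi (U \<union> S)) x" using phiE_pos x by (simp add: less_imp_le)
    qed
    finally show ?thesis .
  qed
  define N where "N = nat \<lfloor>z\<rfloor>"
  have harmE: "harm N \<le> (\<Sum>V\<in>E. 1 / phi V)"
  proof -
    have img: "prime_factors ` {1..N} \<subseteq> E"
    proof
      fix V assume "V \<in> prime_factors ` {1..N}"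
      then obtain n where n: "n \<in> {1..N}" "V = prime_factors n" by auto
      have "\<forall>p\<in>V. prime p \<and> p dvd n" using n by (auto simp: in_prime_factors_iff)
      then have "(\<Prod>p\<in>V. p) dvd n" using n by (intro prod_primes_dvd) auto
      then have "(\<Prod>p\<in>V. p) \<le> n" using n by (intro dvd_imp_le) auto
      moreover have "real n \<le> z"
      proof -
        have "real n \<le> real (nat \<lfloor>z\<rfloor>)" using n unfolding N_def by simp
        also have "real (nat \<lfloor>z\<rfloor>) \<le> z" using z1 of_int_floor_le[of z] by (simp add: of_nat_nat)
        finally show ?thesis .
      qed
      ultimately have 1: "real (\<Prod>p\<in>V. p) \<le> z" by (metis of_nat_le_iff order_trans)
      have "V \<subseteq> Z"
      proof
        fix p assume "p \<in> V"
        then have "prime p" "p dvd n" using n by (auto simp: in_prime_factors_iff)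
        then have "p \<le> n" using n by (intro dvd_imp_le) auto
        then show "p \<in> Z" unfolding Z_def using \<open>prime p\<close> \<open>real n \<le> z\<close> by (metis (mono_tags) mem_Collect_eq of_nat_le_iff order_trans)
      qed
      then show "V \<in> E" using 1 unfolding E_def by auto
    qed
    have "harm N = (\<Sum>n\<in>{1..N}. 1 / real n)" unfolding harm_def by (simp add: divide_inverse)
    also have "\<dots> = (\<Sum>V\<in>E. \<Sum>n\<in>{n. n \<in> {1..N} \<and> prime_factors n = V}. 1 / real n)"
      using sum.group[OF _ finE img, of "\<lambda>n. 1 / real n"] by simp
    also have "\<dots> \<le> (\<Sum>V\<in>E. \<Prod>p\<in>V. 1 / (real p - 1))"
    proof (intro sum_mono)
      fix V assume V: "V \<in> E"
      show "(\<Sum>n\<in>{n. n \<in> {1..N} \<and> prime_factors n = V}. 1 / real n) \<le> (\<Prod>p\<in>V. 1 / (real p - 1))"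
        using finV[OF V] Eprime[OF V] by (intro recip_sum_rad) auto
    qed
    also have "\<dots> = (\<Sum>V\<in>E. 1 / phi V)" unfolding phi_def by (simp add: prod_dividef)
    finally show ?thesis .
  qed
  have "ln z \<le> ln (real N + 1)"
  proof -
    have "z \<le> real N + 1" unfolding N_def using z1 by linarith
    then show ?thesis using z1 by simp
  qed
  also have "\<dots> \<le> harm N" by (rule ln_le_harm)
  finally show ?thesis using harmE ge prodG tot by simp
qed

end

lemma BT:
  fixes f :: nat and t :: real
  assumes f1: "f \<ge> 1" and t2: "t \<ge> 2"
  shows "real (card {p. prime p \<and> f^2 \<le> p \<and> real p \<le> t \<and> [p = 1] (mod f)})
         \<le> 40 * t / (real (totient f) * ln t)"
proof -
  define Pt where "Pt = {p. prime p \<and> f^2 \<le> p \<and> real p \<le> t \<and> [p = 1] (mod f)}"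
  have tot_pos: "real (totient f) > 0" using f1 by simp
  have lnt: "ln t > 0" using t2 by simp
  have rhs_pos: "40 * t / (real (totient f) * ln t) \<ge> 0" using tot_pos lnt t2 by simp
  show ?thesis
  proof (cases "real (f^2) \<le> t")
    case False
    then have "Pt = {}" unfolding Pt_def by (auto dest: order_trans[OF of_nat_le_iff[THEN iffD2]])
    then have "real (card Pt) = 0" by simp
    then show ?thesis using rhs_pos unfolding Pt_def by linarith
  next
    case True
    define z where "z = t powr (1/10)"
    have zgt1: "z > 1" unfolding z_def using t2 by simp
    have zpos: "z > 0" using zgt1 by simp
    have zt: "z ^ 10 = t"
    proof -
      have "z ^ 10 = z powr (real 10)" using zpos by (rule powr_realpow[symmetric])
      also have "\<dots> = t powr (1/10 * real 10)" unfolding z_def by (rule powr_powr)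
      also have "\<dots> = t" using t2 by simp
      finally show ?thesis .
    qed
    interpret sieve f z using f1 zgt1 by unfold_locales auto
    have lnz: "ln t = 10 * ln z"
    proof -
      have "ln t = ln (z ^ 10)" using zt by simp
      also have "\<dots> = real 10 * ln z" using zpos by (simp add: ln_realpow)
      finally show ?thesis by simp
    qed
    have "Pt \<subseteq> {p. prime p \<and> real p \<le> z} \<union> {p \<in> {1..nat \<lfloor>t\<rfloor>}. [p = 1] (mod f) \<and> prime p \<and> z < real p}"
    proof
      fix p assume "p \<in> Pt"
      then have p: "prime p" "real p \<le> t" "[p = 1] (mod f)" unfolding Pt_def by auto
      then have "p \<ge> 1" using prime_gt_0_nat[of p] by linarith
      moreover have "p \<le> nat \<lfloor>t\<rfloor>" using p(2) by (simp add: le_nat_floor)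
      ultimately show "p \<in> {p. prime p \<and> real p \<le> z} \<union> {p \<in> {1..nat \<lfloor>t\<rfloor>}. [p = 1] (mod f) \<and> prime p \<and> z < real p}"
        using p by auto
    qed
    then have c0: "real (card Pt) \<le> real (card ({p. prime p \<and> real p \<le> z} \<union> {p \<in> {1..nat \<lfloor>t\<rfloor>}. [p = 1] (mod f) \<and> prime p \<and> z < real p}))"
    proof (intro of_nat_mono card_mono)
      have "{p. prime p \<and> real p \<le> z} \<subseteq> {..nat \<lfloor>z\<rfloor>}" by (auto simp: le_nat_floor)
      then have "finite {p. prime p \<and> real p \<le> z}" by (rule finite_subset) simp
      then show "finite ({p. prime p \<and> real p \<le> z} \<union> {p \<in> {1..nat \<lfloor>t\<rfloor>}. [p = 1] (mod f) \<and> prime p \<and> z < real p})"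
        by simp
    qed
    have c1: "real (card ({p. prime p \<and> real p \<le> z} \<union> {p \<in> {1..nat \<lfloor>t\<rfloor>}. [p = 1] (mod f) \<and> prime p \<and> z < real p})) \<le> real (card {p. prime p \<and> real p \<le> z}) + real (card {p \<in> {1..nat \<lfloor>t\<rfloor>}. [p = 1] (mod f) \<and> prime p \<and> z < real p})"
    proof -
      have "card ({p. prime p \<and> real p \<le> z} \<union> {p \<in> {1..nat \<lfloor>t\<rfloor>}. [p = 1] (mod f) \<and> prime p \<and> z < real p})
         \<le> card {p. prime p \<and> real p \<le> z} + card {p \<in> {1..nat \<lfloor>t\<rfloor>}. [p = 1] (mod f) \<and> prime p \<and> z < real p}"
        by (rule card_Un_le)
      then show ?thesis by (simp only: of_nat_add[symmetric] of_nat_le_iff)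
    qed
    have c2: "real (card {p. prime p \<and> real p \<le> z}) \<le> z"
    proof -
      have "{p. prime p \<and> real p \<le> z} \<subseteq> {1..nat \<lfloor>z\<rfloor>}" by (auto simp: le_nat_floor Suc_le_eq prime_gt_0_nat)
      then have "card {p. prime p \<and> real p \<le> z} \<le> nat \<lfloor>z\<rfloor>" by (metis card_atLeastAtMost card_mono diff_Suc_1 finite_atLeastAtMost)
      then have "real (card {p. prime p \<and> real p \<le> z}) \<le> real (nat \<lfloor>z\<rfloor>)" by (simp only: of_nat_le_iff)
      also have "real (nat \<lfloor>z\<rfloor>) \<le> z" using zgt1 of_int_floor_le[of z] by (simp add: of_nat_nat)
      finally show ?thesis .
    qed
    have c3: "real (card {p \<in> {1..nat \<lfloor>t\<rfloor>}. [p = 1] (mod f) \<and> prime p \<and> z < real p}) \<le> t / f * Qsum + 2 * (\<Sum>S\<in>D. \<bar>lam S\<bar>)^2"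
      using sieve_main t2 by simp
    have "(\<Sum>S\<in>D. \<bar>lam S\<bar>) \<le> z ^ 2"
    proof -
      have "(\<Sum>S\<in>D. \<bar>lam S\<bar>) \<le> real (card D) * z" using lam_bound by (rule sum_bounded_above)
      also have "\<dots> \<le> z * z" using card_D zgt1 by (intro mult_right_mono) auto
      finally show ?thesis by (simp add: power2_eq_square)
    qed
    then have c5: "2 * (\<Sum>S\<in>D. \<bar>lam S\<bar>)^2 \<le> 2 * (z^2)^2"
      by (intro mult_left_mono power_mono) (auto intro: sum_nonneg)
    have c6: "t / f * Qsum \<le> 10 * t / (real (totient f) * ln t)"
    proof -
      have G: "ln z \<le> real f / real (totient f) * G" by (rule G_lower)
      have lnzpos: "ln z > 0" using zgt1 by simp
      have fpos: "real f > 0" using f1 by simp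
      have "real (totient f) * ln z \<le> real f * G" using G tot_pos by (simp add: field_simps)
      then have "t / (real f * G) \<le> t / (real (totient f) * ln z)"
      proof (rule divide_left_mono)
        show "0 \<le> t" using t2 by simp
        have "real f * G > 0" using fpos G_pos by simp
        moreover have "real (totient f) * ln z > 0" using tot_pos lnzpos by simp
        ultimately show "0 < real f * G * (real (totient f) * ln z)" by simp
      qed
      then show ?thesis unfolding Qsum_eq lnz by (simp add: field_simps)
    qed
    have main: "real (card Pt) \<le> z + 10 * t / (real (totient f) * ln t) + 2 * (z^2)^2"
      using c0 c1 c2 c3 c5 c6 by linarith
    have fz: "real f \<le> z ^ 5"
    proof -
      have e1: "(z^5)^2 = z^10" by (simp only: power_mult[symmetric]) simp
      have e2: "(real f)^2 = real (f^2)" by simp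
      have "(real f)^2 \<le> (z^5)^2" unfolding e1 e2 zt using True .
      moreover have "0 \<le> z^5" using zgt1 by simp
      ultimately show ?thesis by (rule power2_le_imp_le)
    qed
    have "totient f \<le> f" by (rule totient_le)
    then have "real (totient f) \<le> real f" by (simp only: of_nat_le_iff)
    then have totf: "real (totient f) \<le> z ^ 5" using fz by linarith
    have "ln z \<le> z - 1" using zpos by (rule ln_le_minus_one)
    then have lnzz: "ln z \<le> z" by linarith
    have z4: "z \<le> z ^ 4" by (rule self_le_power) (use zgt1 in auto)
    have z22: "(z^2)^2 = z^4" by (simp only: power_mult[symmetric]) simp
    have m1: "z + 2 * (z^2)^2 \<le> 3 * z^4" using z4 z22 by linarith
    have m2: "real (totient f) * ln t \<le> z^5 * (10 * z)"
    proof -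
      have "real (totient f) * ln z \<le> z^5 * z"
        using totf lnzz tot_pos zgt1 by (intro mult_mono) auto
      then show ?thesis unfolding lnz by linarith
    qed
    have m3: "(z + 2 * (z^2)^2) * (real (totient f) * ln t) \<le> (3 * z^4) * (z^5 * (10 * z))"
      by (rule mult_mono[OF m1 m2]) (use tot_pos lnt zpos in auto)
    have m4: "(3 * z^4) * (z^5 * (10 * z)) = 30 * t"
    proof -
      have "(3 * z^4) * (z^5 * (10 * z)) = 30 * (z^4 * z^5 * z)" by (simp add: algebra_simps)
      also have "z^4 * z^5 * z = z^(4+5+1)" by (simp only: power_add power_one_right)
      also have "\<dots> = t" using zt by simp
      finally show ?thesis .
    qed
    have pos: "real (totient f) * ln t > 0" using tot_pos lnt by simp
    have last: "z + 2 * (z^2)^2 \<le> 30 * t / (real (totient f) * ln t)"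
      using m3 m4 pos by (simp add: pos_le_divide_eq)
    define X where "X = t / (real (totient f) * ln t)"
    have X: "10 * t / (real (totient f) * ln t) = 10 * X" "30 * t / (real (totient f) * ln t) = 30 * X"
      "40 * t / (real (totient f) * ln t) = 40 * X" unfolding X_def by simp_all
    have "real (card Pt) \<le> 40 * t / (real (totient f) * ln t)" using main last unfolding X by linarith
    then show ?thesis unfolding Pt_def .
  qed
qed

lemma pf_sum:
  fixes K :: nat
  shows "(\<Sum>j<K. 1 / ((real j + 1) * (real K - real j))) = 2 * harm K / (real K + 1)"
proof -
  have "(\<Sum>j<K. 1 / ((real j + 1) * (real K - real j)))
      = (\<Sum>j<K. (1 / (real j + 1) + 1 / (real K - real j)) / (real K + 1))"
  proof (intro sum.cong refl)
    fix j assume "j \<in> {..<K}"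
    define a where "a = real j + 1"
    define b where "b = real K - real j"
    have pos: "a > 0" "b > 0" unfolding a_def b_def using \<open>j \<in> {..<K}\<close> by auto
    have ab: "real K + 1 = a + b" unfolding a_def b_def by simp
    have "1 / a + 1 / b = (a + b) / (a * b)" using pos by (simp add: field_simps)
    then have "1 / (a * b) = (1 / a + 1 / b) / (a + b)" using pos by simp
    then show "1 / ((real j + 1) * (real K - real j)) = (1 / (real j + 1) + 1 / (real K - real j)) / (real K + 1)"
      unfolding ab unfolding a_def b_def .
  qed
  also have "\<dots> = ((\<Sum>j<K. 1 / (real j + 1)) + (\<Sum>j<K. 1 / (real K - real j))) / (real K + 1)"
    by (simp add: sum_divide_distrib[symmetric] sum.distrib)
  also have "(\<Sum>j<K. 1 / (real j + 1)) = harm K"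
    unfolding harm_altdef by (simp add: divide_inverse add.commute)
  also have "(\<Sum>j<K. 1 / (real K - real j)) = harm K"
  proof -
    have "(\<Sum>j<K. 1 / (real K - real j)) = (\<Sum>j<K. (\<lambda>i. 1 / (real i + 1)) (K - Suc j))"
      by (intro sum.cong refl) (auto simp: of_nat_diff)
    also have "\<dots> = (\<Sum>j<K. 1 / (real j + 1))" by (rule sum.nat_diff_reindex)
    also have "\<dots> = harm K" unfolding harm_altdef by (simp add: divide_inverse add.commute)
    finally show ?thesis .
  qed
  finally show ?thesis by simp
qed

lemma dyadic:
  fixes y :: real
  assumes "y \<ge> 1"
  shows "2 ^ nat \<lfloor>log 2 y\<rfloor> \<le> y \<and> y < 2 ^ (nat \<lfloor>log 2 y\<rfloor> + 1)"
proof -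
  define j where "j = nat \<lfloor>log 2 y\<rfloor>"
  have l0: "log 2 y \<ge> 0" using assms by simp
  have rj: "real j = of_int \<lfloor>log 2 y\<rfloor>" unfolding j_def using l0 by simp
  have a: "real j \<le> log 2 y" using rj by simp
  have b: "log 2 y < real j + 1" using rj by linarith
  have "2 powr real j \<le> y" using a assms by (subst (asm) le_log_iff) auto
  then have 1: "2 ^ j \<le> y" by (simp add: powr_realpow)
  have "y < 2 powr (real j + 1)" using b assms by (subst (asm) log_less_iff) auto
  then have 2: "y < 2 ^ (j + 1)" by (metis of_nat_1 of_nat_add powr_realpow zero_less_numeral)
  show ?thesis using 1 2 unfolding j_def by simp
qed

lemma harm_le_ln: "K \<ge> 1 \<Longrightarrow> harm K \<le> 1 + ln (real K)"
  using euler_mascheroni_sequence_decreasing[of 1 K] by (simp add: harm_expand)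

lemma final_bound:
  fixes f :: nat and x :: real
  assumes f1: "f \<ge> 1" and x3: "x \<ge> 3"
  shows "(\<Sum>p\<in>{p::nat. prime p \<and> f^2 \<le> p \<and> real p \<le> x \<and> [p = 1] (mod f)}. 1 / (real p * ln (3 * x / real p)))
     \<le> 160 / ln 2 * (1 + ln (ln x / ln 2)) / (real (totient f) * ln x)"
proof -
  define Ps where "Ps = {p::nat. prime p \<and> f^2 \<le> p \<and> real p \<le> x \<and> [p = 1] (mod f)}"
  define g where "g p = 1 / (real p * ln (3 * x / real p))" for p :: nat
  define L where "L = log 2 x"
  define K where "K = nat \<lfloor>L\<rfloor>"
  define jf where "jf p = nat \<lfloor>log 2 (x / real p)\<rfloor>" for p :: nat
  define ph where "ph = real (totient f)"
  have phpos: "ph > 0" unfolding ph_def using f1 by simp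
  have ln2: "ln (2::real) > 0" by simp
  have xpos: "x > 0" using x3 by simp
  have L1: "L \<ge> 1" unfolding L_def using x3 by simp
  have rK: "real K \<le> L" "L < real K + 1" unfolding K_def using L1 by linarith+
  have K1: "K \<ge> 1" unfolding K_def using L1 by linarith
  have twoK: "2 ^ K \<le> x"
  proof -
    have "2 powr real K \<le> x" using rK(1) xpos unfolding L_def by (subst (asm) le_log_iff) auto
    then show ?thesis by (simp add: powr_realpow)
  qed
  have lnx: "ln x = L * ln 2" unfolding L_def log_def by simp
  have finPs: "finite Ps"
  proof -
    have "Ps \<subseteq> {..nat \<lfloor>x\<rfloor>}" unfolding Ps_def by (auto simp: le_nat_floor)
    then show ?thesis by (rule finite_subset) simp
  qed
  have p2: "real p \<ge> 2" if "p \<in> Ps" for p using that prime_ge_2_nat unfolding Ps_def by force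
  have pj: "2 ^ jf p \<le> x / real p \<and> x / real p < 2 ^ (jf p + 1)" if "p \<in> Ps" for p
  proof -
    have "x / real p \<ge> 1" using that p2[OF that] unfolding Ps_def by auto
    then show ?thesis unfolding jf_def by (rule dyadic)
  qed
  have jK: "jf p < K" if p: "p \<in> Ps" for p
  proof -
    have "2 ^ (jf p + 1) = 2 * 2 ^ jf p" by simp
    also have "\<dots> \<le> 2 * (x / real p)" using pj[OF p] by simp
    also have "\<dots> \<le> x" using p2[OF p] xpos by (simp add: field_simps)
    finally have "real (jf p + 1) \<le> L" unfolding L_def by (intro le_log_of_power) auto
    then have "jf p + 1 \<le> K" unfolding K_def by (simp add: le_nat_floor)
    then show ?thesis by simp
  qed
  have img: "jf ` Ps \<subseteq> {..<K}" using jK by auto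
  have "(\<Sum>p\<in>Ps. g p) = (\<Sum>j\<in>{..<K}. \<Sum>p\<in>{p. p \<in> Ps \<and> jf p = j}. g p)"
    using sum.group[OF finPs _ img, of g] by simp
  also have "\<dots> \<le> (\<Sum>j\<in>{..<K}. 80 / (ph * ln 2 * ln 2) * (1 / ((real j + 1) * (real K - real j))))"
  proof (intro sum_mono)
    fix j assume j: "j \<in> {..<K}"
    define Pj where "Pj = {p. p \<in> Ps \<and> jf p = j}"
    define B where "B = 2 ^ (j + 1) / (x * ((real j + 1) * ln 2))"
    have jKr: "real K - real j \<ge> 1" using j by auto
    have two_j1: "(2::real) ^ (j + 1) \<le> x"
    proof -
      have "(2::real) ^ (j + 1) \<le> 2 ^ K" using j by (intro power_increasing) auto
      then show ?thesis using twoK by linarith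
    qed
    have gB: "g p \<le> B" if p: "p \<in> Pj" for p
    proof -
      have pP: "p \<in> Ps" and jp: "jf p = j" using p unfolding Pj_def by auto
      have pp: "real p > 0" using p2[OF pP] by simp
      have h1: "2 ^ j \<le> x / real p" and h2: "x / real p < 2 ^ (j + 1)" using pj[OF pP] jp by auto
      have i1: "1 / real p \<le> 2 ^ (j + 1) / x"
      proof -
        have "x < 2 ^ (j + 1) * real p" using h2 pp by (simp add: field_simps)
        then show ?thesis using pp xpos by (simp add: field_simps)
      qed
      have e1: "(2::real) ^ (j + 1) = 2 * 2 ^ j" by simp
      have e2: "(2::real) * 2 ^ j \<le> 3 * 2 ^ j" by simp
      have e3: "3 * 2 ^ j \<le> 3 * (x / real p)" using h1 by simp
      have e4: "3 * (x / real p) = 3 * x / real p" by simp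
      have "3 * x / real p \<ge> 2 ^ (j + 1)" using e1 e2 e3 e4 by linarith
      then have "ln (3 * x / real p) \<ge> ln (2 ^ (j + 1))" using xpos pp by (subst ln_le_cancel_iff) auto
      also have "ln ((2::real) ^ (j + 1)) = (real j + 1) * ln 2" by (subst ln_realpow) simp
      finally have i2: "(real j + 1) * ln 2 \<le> ln (3 * x / real p)" .
      have i2pos: "(real j + 1) * ln 2 > 0" by simp
      have "g p = (1 / real p) * (1 / ln (3 * x / real p))" unfolding g_def by simp
      also have "\<dots> \<le> (2 ^ (j + 1) / x) * (1 / ((real j + 1) * ln 2))"
      proof (rule mult_mono[OF i1])
        show "1 / ln (3 * x / real p) \<le> 1 / ((real j + 1) * ln 2)"
        proof (rule divide_left_mono)
          have apos: "ln (3 * x / real p) > 0" using i2 i2pos by linarith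
          show "0 < ln (3 * x / real p) * ((real j + 1) * ln 2)" using apos i2pos by simp
        qed (use i2 in auto)
        show "0 \<le> 2 ^ (j + 1) / x" using xpos by simp
        show "0 \<le> 1 / ln (3 * x / real p)"
        proof -
          have "ln (3 * x / real p) > 0" using i2 i2pos by linarith
          then show ?thesis by simp
        qed
      qed
      also have "\<dots> = B" unfolding B_def by simp
      finally show ?thesis .
    qed
    have Bnn: "B \<ge> 0" unfolding B_def using xpos by simp
    define t where "t = x / 2 ^ j"
    have t2: "t \<ge> 2" unfolding t_def using two_j1 by (simp add: field_simps)
    define Qj where "Qj = {p. prime p \<and> f^2 \<le> p \<and> real p \<le> t \<and> [p = 1] (mod f)}"
    have PQ: "Pj \<subseteq> Qj"
    proof
      fix p assume p: "p \<in> Pj"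
      then have pP: "p \<in> Ps" and jp: "jf p = j" unfolding Pj_def by auto
      have pp: "real p > 0" using p2[OF pP] by simp
      have "2 ^ j \<le> x / real p" using pj[OF pP] jp by auto
      then have "real p \<le> t" unfolding t_def using pp by (simp add: field_simps)
      then show "p \<in> Qj" using pP unfolding Ps_def Qj_def by auto
    qed
    have finQ: "finite Qj"
    proof -
      have "Qj \<subseteq> {..nat \<lfloor>t\<rfloor>}" unfolding Qj_def by (auto simp: le_nat_floor)
      then show ?thesis by (rule finite_subset) simp
    qed
    have cardP: "real (card Pj) \<le> 40 * t / (ph * ln t)"
    proof -
      have "card Pj \<le> card Qj" using PQ finQ by (rule card_mono[rotated])
      then have "real (card Pj) \<le> real (card Qj)" by (simp only: of_nat_le_iff)
      also have "\<dots> \<le> 40 * t / (ph * ln t)" unfolding Qj_def ph_def using BT[OF f1 t2] .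
      finally show ?thesis .
    qed
    have lnt: "ln t \<ge> (real K - real j) * ln 2"
    proof -
      have "ln t = ln x - real j * ln 2" unfolding t_def using xpos by (simp add: ln_div ln_realpow)
      also have "\<dots> = (L - real j) * ln 2" using lnx by (simp add: algebra_simps)
      also have "\<dots> \<ge> (real K - real j) * ln 2" using rK(1) by (intro mult_right_mono) auto
      finally show ?thesis .
    qed
    have Kjpos: "(real K - real j) * ln 2 > 0" using jKr by simp
    have "(\<Sum>p\<in>Pj. g p) \<le> real (card Pj) * B" using gB by (rule sum_bounded_above)
    also have "\<dots> \<le> 40 * t / (ph * ln t) * B" using cardP Bnn by (rule mult_right_mono)
    also have "40 * t / (ph * ln t) * B = 80 / (ph * ln 2 * (real j + 1) * ln t)"
    proof -
      have xt: "x = t * 2 ^ j" unfolding t_def by simp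
      have tpos: "t > 0" using t2 by simp
      have B2: "B = 2 / (t * ((real j + 1) * ln 2))"
      proof -
        define a where "a = (2::real) ^ j"
        define c where "c = (real j + 1) * ln 2"
        have apos: "a > 0" unfolding a_def by simp
        have cpos: "c > 0" unfolding c_def using ln2 by simp
        have "2 * a / (t * a * c) = 2 / (t * c)" using apos cpos tpos by (simp add: field_simps)
        moreover have "B = 2 * a / (t * a * c)" unfolding B_def xt a_def c_def by simp
        ultimately show ?thesis unfolding c_def by simp
      qed
      have ltpos: "ln t > 0" using t2 by simp
      define c where "c = (real j + 1) * ln 2"
      define lt where "lt = ln t"
      have cpos: "c > 0" unfolding c_def using ln2 by simp
      have ltp: "lt > 0" unfolding lt_def using ltpos .
      have eq1: "40 * t / (ph * lt) * (2 / (t * c)) = 80 / (ph * lt * c)"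
        using cpos ltp tpos phpos by (simp add: field_simps)
      have eq2: "ph * ln 2 * (real j + 1) * lt = ph * lt * c" unfolding c_def by simp
      show ?thesis unfolding B2 eq2 c_def[symmetric] lt_def[symmetric] by (rule eq1)
    qed
    also have "\<dots> \<le> 80 / (ph * ln 2 * (real j + 1) * ((real K - real j) * ln 2))"
    proof (rule divide_left_mono)
      show "ph * ln 2 * (real j + 1) * ((real K - real j) * ln 2) \<le> ph * ln 2 * (real j + 1) * ln t"
        using lnt phpos by (intro mult_left_mono) auto
      show "0 < ph * ln 2 * (real j + 1) * ln t * (ph * ln 2 * (real j + 1) * ((real K - real j) * ln 2))"
        using lnt Kjpos phpos j t2 by (intro mult_pos_pos) auto
    qed simp
    also have "\<dots> = 80 / (ph * ln 2 * ln 2) * (1 / ((real j + 1) * (real K - real j)))"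
      by (simp add: field_simps)
    finally show "(\<Sum>p\<in>{p. p \<in> Ps \<and> jf p = j}. g p) \<le> 80 / (ph * ln 2 * ln 2) * (1 / ((real j + 1) * (real K - real j)))"
      unfolding Pj_def .
  qed
  also have "\<dots> = 80 / (ph * ln 2 * ln 2) * (\<Sum>j<K. 1 / ((real j + 1) * (real K - real j)))"
    by (rule sum_distrib_left[symmetric])
  also have "\<dots> = 80 / (ph * ln 2 * ln 2) * (2 * harm K / (real K + 1))"
    by (simp only: pf_sum)
  also have "\<dots> \<le> 80 / (ph * ln 2 * ln 2) * (2 * (1 + ln L) / L)"
  proof (rule mult_left_mono)
    have "harm K \<le> 1 + ln (real K)" using K1 by (rule harm_le_ln)
    also have "ln (real K) \<le> ln L" using K1 rK by simp
    finally have hK: "harm K \<le> 1 + ln L" by simp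
    have lnL: "1 + ln L \<ge> 1" using L1 by simp
    have "2 * harm K / (real K + 1) \<le> 2 * (1 + ln L) / (real K + 1)"
      using hK K1 by (intro divide_right_mono) auto
    also have "\<dots> \<le> 2 * (1 + ln L) / L"
      using lnL rK L1 by (intro divide_left_mono) auto
    finally show "2 * harm K / (real K + 1) \<le> 2 * (1 + ln L) / L" .
    show "0 \<le> 80 / (ph * ln 2 * ln 2)" using phpos by simp
  qed
  also have "\<dots> = 160 / ln 2 * (1 + ln (ln x / ln 2)) / (real (totient f) * ln x)"
  proof -
    have "ln x / ln 2 = L" using lnx by simp
    then show ?thesis unfolding ph_def using lnx L1 phpos by (simp add: field_simps)
  qed
  finally show ?thesis unfolding Ps_def g_def .
qed

theorem lemma3p3:
  shows "\<exists>c::real. c > 0 \<and>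
    (\<forall>(f::nat) (x::real). f \<ge> 1 \<longrightarrow> x \<ge> 3 \<longrightarrow>
      (\<Sum>p\<in>{p::nat. prime p \<and> f^2 \<le> p \<and> real p \<le> x \<and> [p = 1] (mod f)}.
          1 / (real p * ln (3 * x / real p)))
      \<le> c * ln (ln x) / (real (totient f) * ln x))"
proof -
  have ln3: "ln (3::real) > 1"
  proof -
    have "exp 1 < (3::real)" using e_less_272 by simp
    then have "ln (exp 1) < ln (3::real)" by (subst ln_less_cancel_iff) auto
    then show ?thesis by simp
  qed
  define a where "a = ln (ln (3::real))"
  have apos: "a > 0" unfolding a_def using ln3 by simp
  define b where "b = 1 - ln (ln (2::real))"
  define c1 where "c1 = 1 + \<bar>b\<bar> / a"
  define c where "c = 160 / ln 2 * c1"
  have c1pos: "c1 > 0"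
  proof -
    have "\<bar>b\<bar> / a \<ge> 0" using apos by simp
    then show ?thesis unfolding c1_def by linarith
  qed
  have cpos: "c > 0" unfolding c_def using c1pos by simp
  show ?thesis
  proof (intro exI[of _ c] conjI allI impI)
    show "c > 0" by (rule cpos)
    fix f :: nat and x :: real
    assume f1: "f \<ge> 1" and x3: "x \<ge> 3"
    have lnx3: "ln x \<ge> ln 3" using x3 by simp
    have lnxpos: "ln x > 0" using lnx3 ln3 by linarith
    have lnlnx: "ln (ln x) \<ge> a" unfolding a_def using lnx3 ln3 by simp
    have key: "1 + ln (ln x / ln 2) \<le> c1 * ln (ln x)"
    proof -
      have "ln (ln x / ln 2) = ln (ln x) - ln (ln 2)" using lnxpos by (simp add: ln_div)
      then have e: "1 + ln (ln x / ln 2) = ln (ln x) + b" unfolding b_def by simp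
      have "\<bar>b\<bar> \<le> \<bar>b\<bar> / a * ln (ln x)"
      proof -
        have "\<bar>b\<bar> / a * ln (ln x) \<ge> \<bar>b\<bar> / a * a" using lnlnx apos by (intro mult_left_mono) auto
        also have "\<bar>b\<bar> / a * a = \<bar>b\<bar>" using apos by simp
        finally show ?thesis .
      qed
      then have "ln (ln x) + b \<le> ln (ln x) + \<bar>b\<bar> / a * ln (ln x)" by linarith
      also have "\<dots> = c1 * ln (ln x)" unfolding c1_def by (simp add: algebra_simps)
      finally show ?thesis using e by simp
    qed
    have phpos: "real (totient f) > 0" using f1 by simp
    have "(\<Sum>p\<in>{p::nat. prime p \<and> f^2 \<le> p \<and> real p \<le> x \<and> [p = 1] (mod f)}. 1 / (real p * ln (3 * x / real p)))
       \<le> 160 / ln 2 * (1 + ln (ln x / ln 2)) / (real (totient f) * ln x)"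
      by (rule final_bound[OF f1 x3])
    also have "\<dots> \<le> 160 / ln 2 * (c1 * ln (ln x)) / (real (totient f) * ln x)"
      using key phpos lnxpos by (intro divide_right_mono mult_left_mono) auto
    also have "\<dots> = c * ln (ln x) / (real (totient f) * ln x)" unfolding c_def by simp
    finally show "(\<Sum>p\<in>{p::nat. prime p \<and> f^2 \<le> p \<and> real p \<le> x \<and> [p = 1] (mod f)}. 1 / (real p * ln (3 * x / real p)))
       \<le> c * ln (ln x) / (real (totient f) * ln x)" .
  qed
qed

end
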